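(* Let $\mathcal{F}=(f_1,\dots,f_M)$ be a random frame of $\mathbb{R}^N$ whose vectors are i.i.d. Gaussian vectors in $\mathbb{R}^N$ (distribution $\mathcal{N}(0,I_N)$), organized into $K$ disjoint pools $I_1,\dots,I_K$ (disjoint, union $\{1,\dots,M\}$) each of size $L$. Let the Maxout operator be $MO(x)=\big(\max_{j\in I_k}\langle x,f_j\rangle\big)_{k=1}^K$. Then, with probability $1$, $MO$ is injective on $\mathbb{R}^N$ if $K\ge 2N+1$. *)

theory Defs
  imports "HOL-Probability.Probability"
begin

definition std_gauss :: "real measure" where
  "std_gauss = density lborel std_normal_density"

text \<open>Probability space of a random frame of M vectors in R^N (N = CARD('n)):
  frame vector j (j < M) has i.i.d. N(0,1) coordinates, i.e. f_j ~ N(0, I_N),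
  and the vectors are independent.\<close>
definition gauss_frame_space :: "nat \<Rightarrow> (nat \<Rightarrow> 'n::finite \<Rightarrow> real) measure" where
  "gauss_frame_space M = PiM {..<M} (\<lambda>_. PiM UNIV (\<lambda>_. std_gauss))"

definition frame_vec :: "(nat \<Rightarrow> 'n::finite \<Rightarrow> real) \<Rightarrow> nat \<Rightarrow> real^'n" where
  "frame_vec \<omega> j = (\<chi> i. \<omega> j i)"

definition maxout :: "(nat \<Rightarrow> nat set) \<Rightarrow> nat \<Rightarrow> (nat \<Rightarrow> real^'n) \<Rightarrow> real^'n \<Rightarrow> (nat \<Rightarrow> real)" where
  "maxout I K f x = (\<lambda>k\<in>{..<K}. Max ((\<lambda>j. x \<bullet> f j) ` I k))"

end

theory Submission
  imports Defs
begin


lemma AL: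
  fixes M :: "'i \<Rightarrow> 'a measure" and P :: "(('i \<Rightarrow> 'a) \<Rightarrow> real) set"
  assumes prob: "\<And>i. prob_space (M i)"
    and spc: "\<And>i. space (M i) = UNIV"
    and meas: "\<And>p J. p \<in> P \<Longrightarrow> p \<in> borel_measurable (PiM J M)"
    and subst: "\<And>p j c. p \<in> P \<Longrightarrow> (\<lambda>w. p (w(j := c))) \<in> P"
    and uni: "\<And>p x j y0. p \<in> P \<Longrightarrow> p (x(j := y0)) \<noteq> 0 \<Longrightarrow> AE y in M j. p (x(j := y)) \<noteq> 0"
  shows "finite J \<Longrightarrow> p \<in> P \<Longrightarrow> (\<And>w w'. (\<forall>j\<in>J. w j = w' j) \<Longrightarrow> p w = p w')
     \<Longrightarrow> p w0 \<noteq> 0 \<Longrightarrow> AE w in PiM J M. p w \<noteq> 0"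
proof (induction J arbitrary: p w0 rule: finite_induct)
  case empty
  then show ?case by (intro AE_I2) (metis empty_iff)
next
  case (insert j J)
  interpret product_sigma_finite M
    by (simp add: product_sigma_finite_def prob prob_space_imp_sigma_finite)
  define q where "q = (\<lambda>w. p (w(j := w0 j)))"
  have qP: "q \<in> P" unfolding q_def using insert subst by blast
  have qdep: "q w = q w'" if "\<forall>i\<in>J. w i = w' i" for w w'
    unfolding q_def using that by (intro insert.prems(2)) auto
  have "q w0 = p w0" unfolding q_def by simp
  with insert have AEq: "AE w in PiM J M. q w \<noteq> 0"
    using qP qdep by (metis)
  define Z where "Z = {w \<in> space (PiM (insert j J) M). p w = 0}"
  have pm: "p \<in> borel_measurable (PiM (insert j J) M)" using meas insert by blast
  have Zs: "Z \<in> sets (PiM (insert j J) M)" unfolding Z_def using pm by measurable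
  have "emeasure (PiM (insert j J) M) Z = (\<integral>\<^sup>+ w. indicator Z w \<partial>PiM (insert j J) M)"
    using Zs by simp
  also have "\<dots> = (\<integral>\<^sup>+ x. (\<integral>\<^sup>+ y. indicator Z (x(j := y)) \<partial>(M j)) \<partial>(PiM J M))"
    using Zs insert by (intro product_nn_integral_insert) auto
  also have "\<dots> = (\<integral>\<^sup>+ x. 0 \<partial>(PiM J M))"
  proof (rule nn_integral_cong_AE)
    show "AE x in PiM J M. (\<integral>\<^sup>+ y. indicator Z (x(j := y)) \<partial>(M j)) = 0"
      using AEq
    proof (rule AE_mp, intro AE_I2 impI)
      fix x assume x: "x \<in> space (PiM J M)" and qx: "q x \<noteq> 0"
      have "AE y in M j. p (x(j := y)) \<noteq> 0"
        using uni[OF insert.prems(1), of x j "w0 j"] qx unfolding q_def by blast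
      then have "AE y in M j. indicator Z (x(j := y)) = (0::ennreal)"
        by (rule AE_mp) (auto simp: Z_def)
      then show "(\<integral>\<^sup>+ y. indicator Z (x(j := y)) \<partial>(M j)) = 0"
        by (simp add: nn_integral_0_iff_AE nn_integral_cong_AE)
    qed
  qed
  finally have "Z \<in> null_sets (PiM (insert j J) M)" using Zs by auto
  then show ?case by (rule AE_I') (auto simp: Z_def)
qed



inductive_set polyfun :: "('v \<Rightarrow> 'a \<Rightarrow> real) \<Rightarrow> ('a \<Rightarrow> real) set" for var where
  pf_const: "(\<lambda>_. c) \<in> polyfun var"
| pf_var: "var v \<in> polyfun var"
| pf_add: "p \<in> polyfun var \<Longrightarrow> q \<in> polyfun var \<Longrightarrow> (\<lambda>x. p x + q x) \<in> polyfun var"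
| pf_mult: "p \<in> polyfun var \<Longrightarrow> q \<in> polyfun var \<Longrightarrow> (\<lambda>x. p x * q x) \<in> polyfun var"

lemma polyfun_meas:
  assumes "\<And>v. var v \<in> borel_measurable M" "p \<in> polyfun var"
  shows "p \<in> borel_measurable M"
  using assms(2) by induction (use assms(1) in auto)

lemma polyfun_sum:
  assumes "finite A" "\<And>a. a \<in> A \<Longrightarrow> f a \<in> polyfun var"
  shows "(\<lambda>x. \<Sum>a\<in>A. f a x) \<in> polyfun var"
  using assms by (induction A rule: finite_induct) (auto intro: polyfun.intros)

lemma polyfun_prod:
  assumes "finite A" "\<And>a. a \<in> A \<Longrightarrow> f a \<in> polyfun var"
  shows "(\<lambda>x. \<Prod>a\<in>A. f a x) \<in> polyfun var"
  using assms by (induction A rule: finite_induct) (auto intro: polyfun.intros)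


definition var1 :: "'n \<Rightarrow> ('n \<Rightarrow> real) \<Rightarrow> real" where [simp]: "var1 i x = x i"

lemma std_gauss_prob: "prob_space std_gauss"
  unfolding std_gauss_def by (rule prob_space_normal_density) simp

lemma space_std_gauss[simp]: "space std_gauss = UNIV"
  unfolding std_gauss_def by simp

lemma sets_std_gauss[simp]: "sets std_gauss = sets borel"
  unfolding std_gauss_def by simp

lemma std_gauss_AE_finite:
  assumes "finite F" shows "AE y in std_gauss. y \<notin> F"
proof -
  have "AE y in lborel. y \<notin> F"
    by (intro AE_not_in countable_imp_null_set_lborel countable_finite assms)
  then show ?thesis unfolding std_gauss_def
    by (subst AE_density) (simp, rule AE_mp, assumption, simp)
qed

lemma uni1_poly:
  assumes "p \<in> polyfun var1"
  shows "\<exists>q. \<forall>y. p (x(j := y)) = poly q y"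
  using assms
proof induction
  case (pf_const c) then show ?case by (intro exI[of _ "[:c:]"]) auto
next
  case (pf_var v) show ?case
  proof (cases "v = j")
    case True then show ?thesis by (intro exI[of _ "[:0,1:]"]) auto
  next
    case False then show ?thesis by (intro exI[of _ "[:x v:]"]) auto
  qed
next
  case (pf_add p q)
  then obtain a b where "\<forall>y. p (x(j := y)) = poly a y" "\<forall>y. q (x(j := y)) = poly b y" by blast
  then have "\<forall>y. p (x(j := y)) + q (x(j := y)) = poly (a+b) y" by (simp add: poly_add)
  then show ?case by blast
next
  case (pf_mult p q)
  then obtain a b where "\<forall>y. p (x(j := y)) = poly a y" "\<forall>y. q (x(j := y)) = poly b y" by blast
  then have "\<forall>y. p (x(j := y)) * q (x(j := y)) = poly (a*b) y" by (simp add: poly_mult)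
  then show ?case by blast
qed

lemma subst1:
  assumes "p \<in> polyfun var1" shows "(\<lambda>w. p (w(j := c))) \<in> polyfun var1"
  using assms
proof induction
  case (pf_var v) then show ?case
    by (cases "v = j") (auto intro: polyfun.intros)
qed (auto intro: polyfun.intros)

lemma var1_meas: "(\<lambda>x. x i) \<in> borel_measurable (PiM J (\<lambda>_. std_gauss))"
proof (cases "i \<in> J")
  case True
  then have "(\<lambda>x. x i) \<in> measurable (PiM J (\<lambda>_. std_gauss)) std_gauss"
    by (rule measurable_component_singleton)
  then show ?thesis by (simp cong: measurable_cong_sets)
next
  case False
  then show ?thesis
    by (subst measurable_cong[where g="\<lambda>x. undefined"]) (auto simp: space_PiM PiE_def extensional_def)
qed

lemma var1_meas': "var1 i \<in> borel_measurable (PiM J (\<lambda>_. std_gauss))"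
  using var1_meas[of i J] by (simp add: var1_def[abs_def])

lemma L1:
  fixes p :: "('n::finite \<Rightarrow> real) \<Rightarrow> real"
  assumes "p \<in> polyfun var1" "p x0 \<noteq> 0"
  shows "AE x in PiM UNIV (\<lambda>_. std_gauss). p x \<noteq> 0"
proof (rule AL[where P="polyfun var1"])
  show "prob_space std_gauss" for i :: 'n by (rule std_gauss_prob)
  show "space std_gauss = UNIV" for i :: 'n by simp
  show "p \<in> borel_measurable (PiM J (\<lambda>_. std_gauss))" if "p \<in> polyfun var1" for p and J :: "'n set"
    using that by (rule polyfun_meas[OF var1_meas'])
  show "(\<lambda>w. p (w(j := c))) \<in> polyfun var1" if "p \<in> polyfun var1" for p and j :: 'n and c
    using that by (rule subst1)
  show "AE y in std_gauss. p (x(j := y)) \<noteq> 0" if pp: "p \<in> polyfun var1" "p (x(j := y0)) \<noteq> 0" for p and x :: "'n \<Rightarrow> real" and j y0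
  proof -
    obtain q where q: "\<forall>y. p (x(j := y)) = poly q y" using uni1_poly[OF pp(1)] by blast
    then have "q \<noteq> 0" using pp(2) by auto
    then have "finite {y. poly q y = 0}" by (rule poly_roots_finite)
    then have "AE y in std_gauss. y \<notin> {y. poly q y = 0}" by (rule std_gauss_AE_finite)
    then show ?thesis by (rule AE_mp) (intro AE_I2, use q in simp)
  qed
qed (use assms in \<open>auto simp: fun_eq_iff[symmetric]\<close>)



definition var2 :: "nat \<times> 'n \<Rightarrow> (nat \<Rightarrow> 'n \<Rightarrow> real) \<Rightarrow> real" where
  [simp]: "var2 v w = w (fst v) (snd v)"

lemma subst2:
  assumes "p \<in> polyfun var2" shows "(\<lambda>w. p (w(j := c))) \<in> polyfun var2"
  using assms
proof induction
  case (pf_var v) show ?case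
  proof (cases "fst v = j")
    case True
    then have "(\<lambda>w. var2 v (w(j := c))) = (\<lambda>_. c (snd v))" by auto
    then show ?thesis by (simp only:) (rule pf_const)
  next
    case False
    then have "(\<lambda>w. var2 v (w(j := c))) = var2 v" by (auto simp: fun_eq_iff)
    then show ?thesis by (simp only:) (rule pf_var)
  qed
qed (auto intro: polyfun.intros)

lemma restr2:
  assumes "p \<in> polyfun var2" shows "(\<lambda>y. p (w(j := y))) \<in> polyfun var1"
  using assms
proof induction
  case (pf_var v) show ?case
  proof (cases "fst v = j")
    case True
    then have "(\<lambda>y. var2 v (w(j := y))) = var1 (snd v)" by (auto simp: fun_eq_iff)
    then show ?thesis by (simp only:) (rule pf_var)
  next
    case False
    then have "(\<lambda>y. var2 v (w(j := y))) = (\<lambda>_. w (fst v) (snd v))" by (auto simp: fun_eq_iff)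
    then show ?thesis by (simp only:) (rule pf_const)
  qed
qed (auto intro: polyfun.intros)

abbreviation "Gv \<equiv> PiM UNIV (\<lambda>_::'n::finite. std_gauss)"

lemma space_Gv: "space (Gv :: ('n::finite \<Rightarrow> real) measure) = UNIV"
  by (auto simp: space_PiM PiE_def extensional_def)

lemma var2_meas: "var2 v \<in> borel_measurable (PiM J (\<lambda>_. Gv :: ('n::finite \<Rightarrow> real) measure))"
proof (cases "fst v \<in> J")
  case True
  then have a: "(\<lambda>w. w (fst v)) \<in> measurable (PiM J (\<lambda>_. Gv)) (Gv :: ('n::finite \<Rightarrow> real) measure)"
    by (rule measurable_component_singleton)
  have b: "(\<lambda>x. x (snd v)) \<in> borel_measurable (Gv :: ('n::finite \<Rightarrow> real) measure)"
    by (rule var1_meas)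
  have "var2 v = (\<lambda>x. x (snd v)) \<circ> (\<lambda>w. w (fst v))" by (auto simp: fun_eq_iff)
  then show ?thesis using measurable_comp[OF a b] by simp
next
  case False
  then show ?thesis unfolding var2_def
    by (subst measurable_cong[where g="\<lambda>x. undefined (snd v)"]) (auto simp: space_PiM PiE_def extensional_def)
qed

lemma L2:
  fixes p :: "(nat \<Rightarrow> 'n::finite \<Rightarrow> real) \<Rightarrow> real"
  assumes "finite J" "p \<in> polyfun var2" "\<And>w w'. (\<forall>j\<in>J. w j = w' j) \<Longrightarrow> p w = p w'" "p w0 \<noteq> 0"
  shows "AE w in PiM J (\<lambda>_. Gv). p w \<noteq> 0"
proof (rule AL[where P="polyfun var2", OF _ _ _ _ _ assms])
  show "prob_space (Gv :: ('n::finite \<Rightarrow> real) measure)" for i :: nat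
    by (intro prob_space_PiM std_gauss_prob)
  show "space (Gv :: ('n::finite \<Rightarrow> real) measure) = UNIV" for i :: nat by (rule space_Gv)
  show "p \<in> borel_measurable (PiM J (\<lambda>_. Gv))" if "p \<in> polyfun var2" for p and J :: "nat set"
    using that by (rule polyfun_meas[OF var2_meas])
  show "(\<lambda>w. p (w(j := c))) \<in> polyfun var2" if "p \<in> polyfun var2" for p and j :: nat and c
    using that by (rule subst2)
  show "AE y in Gv. p (x(j := y)) \<noteq> 0" if pp: "p \<in> polyfun var2" "p (x(j := y0)) \<noteq> 0"
    for p and x :: "nat \<Rightarrow> 'n \<Rightarrow> real" and j y0
  proof -
    have "(\<lambda>y. p (x(j := y))) y0 \<noteq> 0" using pp(2) by simp
    from L1[OF restr2[OF pp(1)] this] show ?thesis .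
  qed
qed



lemma det_poly:
  fixes A :: "(nat \<Rightarrow> 'n::finite \<Rightarrow> real) \<Rightarrow> real^'m::finite^'m"
  assumes "\<And>r c. (\<lambda>w. A w $ r $ c) \<in> polyfun var2"
  shows "(\<lambda>w. det (A w)) \<in> polyfun var2"
  unfolding det_def
  by (intro polyfun_sum finite_permutations pf_mult pf_const polyfun_prod finite assms)

lemma sum_UNIV_sum_type:
  fixes f :: "'a::finite + 'b::finite \<Rightarrow> 'c::comm_monoid_add"
  shows "sum f UNIV = (\<Sum>i\<in>UNIV. f (Inl i)) + (\<Sum>i\<in>UNIV. f (Inr i))"
proof -
  have "sum f UNIV = sum f (range Inl \<union> range Inr)" by (simp add: UNIV_sum[symmetric])
  also have "\<dots> = sum f (range Inl) + sum f (range Inr)"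
    by (intro sum.union_disjoint) auto
  also have "\<dots> = (\<Sum>i\<in>UNIV. f (Inl i)) + (\<Sum>i\<in>UNIV. f (Inr i))"
    by (simp add: sum.reindex)
  finally show ?thesis .
qed

lemma finite_funs_lt: "finite {s :: 'a::finite \<Rightarrow> nat. \<forall>r. s r < M}"
proof (rule finite_subset[of _ "PiE UNIV (\<lambda>_. {..<M})"])
  show "{s :: 'a::finite \<Rightarrow> nat. \<forall>r. s r < M} \<subseteq> PiE UNIV (\<lambda>_. {..<M})"
    by (auto simp: PiE_def extensional_def)
qed (auto intro: finite_PiE)

lemma gfs: "gauss_frame_space M = PiM {..<M} (\<lambda>_. Gv)"
  unfolding gauss_frame_space_def ..

lemma G1_AE:
  "AE w in (gauss_frame_space M :: (nat \<Rightarrow> 'n::finite \<Rightarrow> real) measure).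
     \<forall>\<sigma> \<in> {\<sigma>::'n \<Rightarrow> nat. inj \<sigma> \<and> (\<forall>r. \<sigma> r < M)}. det (\<chi> r. frame_vec w (\<sigma> r)) \<noteq> 0"
proof (rule AE_finite_allI)
  show "finite {\<sigma>::'n \<Rightarrow> nat. inj \<sigma> \<and> (\<forall>r. \<sigma> r < M)}"
    by (rule finite_subset[OF _ finite_funs_lt]) auto
  fix \<sigma> :: "'n \<Rightarrow> nat" assume s: "\<sigma> \<in> {\<sigma>::'n \<Rightarrow> nat. inj \<sigma> \<and> (\<forall>r. \<sigma> r < M)}"
  define w0 :: "nat \<Rightarrow> 'n \<Rightarrow> real" where "w0 j c = (if \<exists>r. \<sigma> r = j \<and> c = r then 1 else 0)" for j c
  have "(\<chi> r. frame_vec w0 (\<sigma> r)) = mat 1"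
    using s by (auto simp: vec_eq_iff mat_def frame_vec_def w0_def inj_eq)
  then have nz: "det (\<chi> r. frame_vec w0 (\<sigma> r)) \<noteq> 0" by simp
  show "AE w in (gauss_frame_space M :: (nat \<Rightarrow> 'n::finite \<Rightarrow> real) measure). det (\<chi> r. frame_vec w (\<sigma> r)) \<noteq> 0"
    unfolding gfs
  proof (rule L2[where p="\<lambda>w. det (\<chi> r. frame_vec w (\<sigma> r))", OF _ _ _ nz])
    show "(\<lambda>w. det (\<chi> r. frame_vec w (\<sigma> r))) \<in> polyfun var2"
    proof (rule det_poly)
      fix r c
      have "(\<lambda>w. (\<chi> r. frame_vec w (\<sigma> r)) $ r $ c) = var2 (\<sigma> r, c)"
        by (auto simp: fun_eq_iff frame_vec_def)
      then show "(\<lambda>w. (\<chi> r. frame_vec w (\<sigma> r)) $ r $ c) \<in> polyfun var2"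
        by (simp only:) (rule pf_var)
    qed
    fix w w' :: "nat \<Rightarrow> 'n \<Rightarrow> real" assume "\<forall>j\<in>{..<M}. w j = w' j"
    then have "(\<chi> r. frame_vec w (\<sigma> r)) = (\<chi> r. frame_vec w' (\<sigma> r))"
      using s by (auto simp: vec_eq_iff frame_vec_def)
    then show "det (\<chi> r. frame_vec w (\<sigma> r)) = det (\<chi> r. frame_vec w' (\<sigma> r))" by simp
  qed simp
qed



definition mat2 :: "(nat \<Rightarrow> 'n::finite \<Rightarrow> real) \<Rightarrow> ('n + 'n \<Rightarrow> nat) \<Rightarrow> ('n + 'n \<Rightarrow> nat) \<Rightarrow> real^('n+'n)^('n+'n)" where
  "mat2 w \<alpha> \<beta> = (\<chi> r c. case c of Inl i \<Rightarrow> w (\<alpha> r) i | Inr i \<Rightarrow> - w (\<beta> r) i)"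

definition good2 :: "nat \<Rightarrow> (('n::finite + 'n \<Rightarrow> nat) \<times> ('n + 'n \<Rightarrow> nat)) set" where
  "good2 M = {(\<alpha>,\<beta>). inj \<alpha> \<and> inj \<beta> \<and> (\<forall>r r'. r \<noteq> r' \<longrightarrow> \<alpha> r \<noteq> \<beta> r') \<and> (\<forall>i. \<alpha> (Inr i) \<noteq> \<beta> (Inr i))
      \<and> (\<forall>r. \<alpha> r < M \<and> \<beta> r < M)}"

lemma det_nz_of_kernel:
  fixes A :: "real^'m::finite^'m"
  assumes "\<And>z. A *v z = 0 \<Longrightarrow> z = 0"
  shows "det A \<noteq> 0"
proof -
  have "inj ((*v) A)"
  proof (rule injI)
    fix z z' assume "A *v z = A *v z'"
    then have "A *v (z - z') = 0" by (simp add: matrix_vector_mult_diff_distrib)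
    then show "z = z'" using assms[of "z - z'"] by simp
  qed
  then show ?thesis
    using det_nz_iff_inj[OF matrix_vector_mul_linear[of A]] by (simp add: matrix_of_matrix_vector_mul)
qed

lemma witness2:
  fixes \<alpha> \<beta> :: "'n::finite + 'n \<Rightarrow> nat"
  assumes "(\<alpha>,\<beta>) \<in> good2 M"
  shows "\<exists>w0. det (mat2 w0 \<alpha> \<beta>) \<noteq> 0"
proof -
  have ia: "inj \<alpha>" and ib: "inj \<beta>" and ab: "\<And>r r'. \<alpha> r = \<beta> r' \<Longrightarrow> r = r'"
    and d: "\<And>i. \<alpha> (Inr i) \<noteq> \<beta> (Inr i)"
    using assms by (auto simp: good2_def)
  define w0 :: "nat \<Rightarrow> 'n \<Rightarrow> real" where "w0 j c =
     (if \<exists>i. j = \<alpha> (Inl i) \<and> c = i then 1 else if \<exists>i. j = \<beta> (Inl i) \<and> c = i then 1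
      else if \<exists>i. j = \<beta> (Inr i) \<and> c = i then -1 else 0)" for j c
  have e1: "w0 (\<alpha> (Inl i)) c = (if c = i then 1 else 0)" for i c
    using ia ib unfolding w0_def by (auto simp: inj_eq dest: ab ab[OF sym])
  have e2: "w0 (\<beta> (Inl i)) c = (if c = i then 1 else 0)" for i c
    using ia ib unfolding w0_def by (auto simp: inj_eq dest: ab ab[OF sym])
  have e3: "w0 (\<alpha> (Inr i)) c = 0" for i c
    using ia ib d[of i] unfolding w0_def by (auto simp: inj_eq dest: ab ab[OF sym])
  have e4: "w0 (\<beta> (Inr i)) c = (if c = i then -1 else 0)" for i c
    using ia ib unfolding w0_def by (auto simp: inj_eq dest: ab ab[OF sym])
  have "det (mat2 w0 \<alpha> \<beta>) \<noteq> 0"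
  proof (rule det_nz_of_kernel)
    fix z assume z: "mat2 w0 \<alpha> \<beta> *v z = 0"
    have r1: "z $ Inl i - z $ Inr i = 0" for i
      using arg_cong[OF z, of "\<lambda>v. v $ Inl i"]
      by (simp add: matrix_vector_mult_def mat2_def sum_UNIV_sum_type e1 e2 if_distrib[of "\<lambda>x. x * _"] sum_negf cong: if_cong)
    have r2: "z $ Inr i = 0" for i
      using arg_cong[OF z, of "\<lambda>v. v $ Inr i"]
      by (simp add: matrix_vector_mult_def mat2_def sum_UNIV_sum_type e3 e4 if_distrib[of "\<lambda>x. x * _"] sum_negf cong: if_cong)
    have "z $ c = 0 $ c" for c
      using r1 r2 by (cases c) auto
    then show "z = 0" by (simp add: vec_eq_iff)
  qed
  then show ?thesis by blast
qed



lemma G2_AE: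
  "AE w in (gauss_frame_space M :: (nat \<Rightarrow> 'n::finite \<Rightarrow> real) measure).
     \<forall>ab \<in> (good2 M :: (('n + 'n \<Rightarrow> nat) \<times> ('n + 'n \<Rightarrow> nat)) set). det (mat2 w (fst ab) (snd ab)) \<noteq> 0"
proof (rule AE_finite_allI)
  show "finite (good2 M :: (('n + 'n \<Rightarrow> nat) \<times> ('n + 'n \<Rightarrow> nat)) set)"
    by (rule finite_subset[OF _ finite_cartesian_product[OF finite_funs_lt finite_funs_lt]])
       (auto simp: good2_def)
  fix ab :: "('n + 'n \<Rightarrow> nat) \<times> ('n + 'n \<Rightarrow> nat)" assume ab: "ab \<in> good2 M"
  obtain \<alpha> \<beta> where abe: "ab = (\<alpha>, \<beta>)" by (cases ab)
  with ab obtain w0 where nz: "det (mat2 w0 \<alpha> \<beta>) \<noteq> 0" using witness2 by blast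
  have lt: "\<alpha> r < M" "\<beta> r < M" for r using ab abe by (auto simp: good2_def)
  have "AE w in (gauss_frame_space M :: (nat \<Rightarrow> 'n::finite \<Rightarrow> real) measure). det (mat2 w \<alpha> \<beta>) \<noteq> 0"
    unfolding gfs
  proof (rule L2[where p="\<lambda>w. det (mat2 w \<alpha> \<beta>)", OF _ _ _ nz])
    show "(\<lambda>w. det (mat2 w \<alpha> \<beta>)) \<in> polyfun var2"
    proof (rule det_poly)
      fix r c :: "'n + 'n"
      show "(\<lambda>w. mat2 w \<alpha> \<beta> $ r $ c) \<in> polyfun var2"
      proof (cases c)
        case (Inl i)
        then have "(\<lambda>w. mat2 w \<alpha> \<beta> $ r $ c) = var2 (\<alpha> r, i)"
          by (auto simp: fun_eq_iff mat2_def)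
        then show ?thesis by (simp only:) (rule pf_var)
      next
        case (Inr i)
        then have "(\<lambda>w. mat2 w \<alpha> \<beta> $ r $ c) = (\<lambda>w. (\<lambda>_. -1) w * var2 (\<beta> r, i) w)"
          by (auto simp: fun_eq_iff mat2_def)
        then show ?thesis by (simp only:) (intro pf_mult pf_const pf_var)
      qed
    qed
    fix w w' :: "nat \<Rightarrow> 'n \<Rightarrow> real" assume "\<forall>j\<in>{..<M}. w j = w' j"
    then have "mat2 w \<alpha> \<beta> = mat2 w' \<alpha> \<beta>"
      using lt by (auto simp: vec_eq_iff mat2_def split: sum.split)
    then show "det (mat2 w \<alpha> \<beta>) = det (mat2 w' \<alpha> \<beta>)" by simp
  qed simp
  then show "AE w in (gauss_frame_space M :: (nat \<Rightarrow> 'n::finite \<Rightarrow> real) measure). det (mat2 w (fst ab) (snd ab)) \<noteq> 0"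
    using abe by simp
qed



lemma kernel_of_det:
  fixes A :: "real^'m::finite^'m"
  assumes "det A \<noteq> 0" "A *v z = 0" shows "z = 0"
proof -
  have "inj ((*v) A)"
    using det_nz_iff_inj[OF matrix_vector_mul_linear[of A]] assms(1) by (simp add: matrix_of_matrix_vector_mul)
  then show ?thesis using assms(2) by (metis injD matrix_vector_mult_0_right)
qed

lemma main_det:
  fixes K L M :: nat and I :: "nat \<Rightarrow> nat set" and w :: "nat \<Rightarrow> 'n::finite \<Rightarrow> real"
  assumes "M = K * L"
    and "L \<ge> 1"
    and dj: "disjoint_family_on I {..<K}"
    and un: "(\<Union>k<K. I k) = {..<M}"
    and cd: "\<forall>k<K. card (I k) = L"
    and KN: "K \<ge> 2 * CARD('n) + 1"
    and G1: "\<forall>\<sigma> \<in> {\<sigma>::'n \<Rightarrow> nat. inj \<sigma> \<and> (\<forall>r. \<sigma> r < M)}. det (\<chi> r. frame_vec w (\<sigma> r)) \<noteq> 0"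
    and G2: "\<forall>ab \<in> (good2 M :: (('n + 'n \<Rightarrow> nat) \<times> ('n + 'n \<Rightarrow> nat)) set). det (mat2 w (fst ab) (snd ab)) \<noteq> 0"
  shows "inj (maxout I K (frame_vec w))"
proof (rule injI)
  fix x y :: "real^'n" assume eqMO: "maxout I K (frame_vec w) x = maxout I K (frame_vec w) y"
  define f where "f = frame_vec w"
  have fin: "finite (I k)" "I k \<noteq> {}" if "k < K" for k
    using cd that \<open>L \<ge> 1\<close> by (auto intro: card_ge_0_finite)
  have sub: "j < M" if "k < K" "j \<in> I k" for k j using un that by blast
  have pool: "k = k'" if "k < K" "k' < K" "j \<in> I k" "j \<in> I k'" for k k' j
    using dj that unfolding disjoint_family_on_def by blast
  have mx: "Max ((\<lambda>j. x \<bullet> f j) ` I k) = Max ((\<lambda>j. y \<bullet> f j) ` I k)" if "k < K" for k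
    using fun_cong[OF eqMO, of k] that by (simp add: maxout_def f_def)
  have "\<forall>k. \<exists>j. k < K \<longrightarrow> j \<in> I k \<and> x \<bullet> f j = Max ((\<lambda>j. x \<bullet> f j) ` I k)"
  proof
    fix k show "\<exists>j. k < K \<longrightarrow> j \<in> I k \<and> x \<bullet> f j = Max ((\<lambda>j. x \<bullet> f j) ` I k)"
    proof (cases "k < K")
      case True
      then have "Max ((\<lambda>j. x \<bullet> f j) ` I k) \<in> (\<lambda>j. x \<bullet> f j) ` I k"
        using fin by (intro Max_in) auto
      then show ?thesis by force
    qed auto
  qed
  then obtain a where a: "\<And>k. k < K \<Longrightarrow> a k \<in> I k \<and> x \<bullet> f (a k) = Max ((\<lambda>j. x \<bullet> f j) ` I k)"
    by metis
  have "\<forall>k. \<exists>j. k < K \<longrightarrow> j \<in> I k \<and> y \<bullet> f j = Max ((\<lambda>j. y \<bullet> f j) ` I k)"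
  proof
    fix k show "\<exists>j. k < K \<longrightarrow> j \<in> I k \<and> y \<bullet> f j = Max ((\<lambda>j. y \<bullet> f j) ` I k)"
    proof (cases "k < K")
      case True
      then have "Max ((\<lambda>j. y \<bullet> f j) ` I k) \<in> (\<lambda>j. y \<bullet> f j) ` I k"
        using fin by (intro Max_in) auto
      then show ?thesis by force
    qed auto
  qed
  then obtain b where b: "\<And>k. k < K \<Longrightarrow> b k \<in> I k \<and> y \<bullet> f (b k) = Max ((\<lambda>j. y \<bullet> f j) ` I k)"
    by metis
  have eq: "x \<bullet> f (a k) = y \<bullet> f (b k)" if "k < K" for k using a b mx that by metis
  have fv: "f j $ i = w j i" for j i by (simp add: f_def frame_vec_def)
  define T where "T = {k. k < K \<and> a k = b k}"
  define S where "S = {k. k < K \<and> a k \<noteq> b k}"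
  have fU: "finite (UNIV :: 'n set)" by simp
  have finT: "finite T" "finite S" by (auto simp: T_def S_def)
  show "x = y"
  proof (cases "CARD('n) \<le> card T")
    case True
    obtain \<tau> :: "'n \<Rightarrow> nat" where \<tau>: "\<tau> ` UNIV \<subseteq> T" "inj \<tau>"
      using card_le_inj[OF fU finT(1) True] by blast
    define \<sigma> where "\<sigma> = a \<circ> \<tau>"
    have \<tau>K: "\<tau> r < K" "a (\<tau> r) = b (\<tau> r)" for r using \<tau> by (auto simp: T_def)
    have "inj \<sigma>"
    proof (rule injI)
      fix r r' assume "\<sigma> r = \<sigma> r'"
      then have "\<tau> r = \<tau> r'" using pool[of "\<tau> r" "\<tau> r'" "a (\<tau> r)"] a[OF \<tau>K(1)[of r]] a[OF \<tau>K(1)[of r']] \<tau>K(1)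
        unfolding \<sigma>_def by auto
      then show "r = r'" using \<tau>(2) by (simp add: inj_eq)
    qed
    moreover have "\<forall>r. \<sigma> r < M" using a \<tau>K(1) sub unfolding \<sigma>_def by auto
    ultimately have dnz: "det (\<chi> r. frame_vec w (\<sigma> r)) \<noteq> 0" using G1 by auto
    have "(\<chi> r. frame_vec w (\<sigma> r)) *v (x - y) = 0"
    proof -
      have "((\<chi> r. frame_vec w (\<sigma> r)) *v (x - y)) $ r = 0" for r
      proof -
        have "((\<chi> r. frame_vec w (\<sigma> r)) *v (x - y)) $ r = f (\<sigma> r) \<bullet> (x - y)"
          by (simp add: matrix_vector_mult_def inner_vec_def f_def)
        also have "\<dots> = x \<bullet> f (a (\<tau> r)) - y \<bullet> f (b (\<tau> r))"
          using \<tau>K[of r] by (simp add: \<sigma>_def inner_diff_left inner_diff_right inner_commute)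
        finally show ?thesis using eq[OF \<tau>K(1)] by simp
      qed
      then show ?thesis by (simp add: vec_eq_iff)
    qed
    then have "x - y = 0" by (rule kernel_of_det[OF dnz])
    then show ?thesis by simp
  next
    case False
    have "S \<union> T = {..<K}" "S \<inter> T = {}" by (auto simp: S_def T_def)
    then have "card S + card T = K" using finT card_Un_disjoint by (metis card_lessThan)
    then have cS: "CARD('n) \<le> card S" using False KN by linarith
    obtain \<tau>2 :: "'n \<Rightarrow> nat" where \<tau>2: "\<tau>2 ` UNIV \<subseteq> S" "inj \<tau>2"
      using card_le_inj[OF fU finT(2) cS] by blast
    define R where "R = {..<K} - \<tau>2 ` UNIV"
    have "\<tau>2 ` UNIV \<subseteq> {..<K}" using \<tau>2 by (auto simp: S_def)
    then have "card R = K - CARD('n)"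
      unfolding R_def using \<tau>2(2) by (simp add: card_Diff_subset card_image)
    then have cR: "CARD('n) \<le> card R" using KN by linarith
    have "finite R" by (simp add: R_def)
    obtain \<tau>1 :: "'n \<Rightarrow> nat" where \<tau>1: "\<tau>1 ` UNIV \<subseteq> R" "inj \<tau>1"
      using card_le_inj[OF fU \<open>finite R\<close> cR] by blast
    define \<rho> where "\<rho> r = (case r of Inl i \<Rightarrow> \<tau>1 i | Inr i \<Rightarrow> \<tau>2 i)" for r
    have t1: "\<tau>1 i \<in> R" and t2: "\<tau>2 i \<in> S" for i using \<tau>1 \<tau>2 by blast+
    have \<rho>K: "\<rho> r < K" for r using t1 t2 by (auto simp: \<rho>_def R_def S_def split: sum.split)
    have \<rho>S: "a (\<rho> (Inr i)) \<noteq> b (\<rho> (Inr i))" for i using t2 by (auto simp: \<rho>_def S_def)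
    have \<rho>inj: "r = r'" if "\<rho> r = \<rho> r'" for r r'
      using that t1 t2 \<tau>1(2) \<tau>2(2) by (auto simp: \<rho>_def R_def inj_eq split: sum.splits) (metis rangeI)+
    define \<alpha> where "\<alpha> = a \<circ> \<rho>"
    define \<beta> where "\<beta> = b \<circ> \<rho>"
    have same: "\<rho> r = \<rho> r'" if "c = a (\<rho> r) \<or> c = b (\<rho> r)" "c = a (\<rho> r') \<or> c = b (\<rho> r')" for c r r'
      using that pool[of "\<rho> r" "\<rho> r'" c, OF \<rho>K \<rho>K] a[OF \<rho>K[of r]] a[OF \<rho>K[of r']] b[OF \<rho>K[of r]] b[OF \<rho>K[of r']]
      by metis
    have "(\<alpha>, \<beta>) \<in> good2 M"
      unfolding good2_def
    proof (clarify, intro conjI allI impI)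
      show "inj \<alpha>" by (rule injI) (metis \<alpha>_def comp_apply same \<rho>inj)
      show "inj \<beta>" by (rule injI) (metis \<beta>_def comp_apply same \<rho>inj)
      show "\<alpha> r \<noteq> \<beta> r'" if "r \<noteq> r'" for r r' using that same \<rho>inj unfolding \<alpha>_def \<beta>_def by (metis comp_apply)
      show "\<alpha> (Inr i) \<noteq> \<beta> (Inr i)" for i using \<rho>S by (simp add: \<alpha>_def \<beta>_def)
      show "\<alpha> r < M" "\<beta> r < M" for r
        using a[OF \<rho>K[of r]] b[OF \<rho>K[of r]] sub[OF \<rho>K[of r]] unfolding \<alpha>_def \<beta>_def by auto
    qed
    then have dnz: "det (mat2 w \<alpha> \<beta>) \<noteq> 0" using G2 by force
    define z :: "real^('n+'n)" where "z = (\<chi> c. case c of Inl i \<Rightarrow> x $ i | Inr i \<Rightarrow> y $ i)"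
    have "mat2 w \<alpha> \<beta> *v z = 0"
    proof -
      have "(mat2 w \<alpha> \<beta> *v z) $ r = 0" for r
      proof -
        have "(mat2 w \<alpha> \<beta> *v z) $ r = f (\<alpha> r) \<bullet> x - f (\<beta> r) \<bullet> y"
          by (simp add: matrix_vector_mult_def mat2_def z_def sum_UNIV_sum_type inner_vec_def fv sum_negf)
        also have "\<dots> = x \<bullet> f (a (\<rho> r)) - y \<bullet> f (b (\<rho> r))"
          by (simp add: \<alpha>_def \<beta>_def inner_commute)
        finally show ?thesis using eq[OF \<rho>K] by simp
      qed
      then show ?thesis by (simp add: vec_eq_iff)
    qed
    then have "z = 0" by (rule kernel_of_det[OF dnz])
    then have "x $ i = 0 \<and> y $ i = 0" for i
      unfolding z_def vec_eq_iff by (metis (no_types, lifting) sum.case vec_lambda_beta zero_index)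
    then show ?thesis by (simp add: vec_eq_iff)
  qed
qed


theorem proposition6:
  fixes K L M :: nat and I :: "nat \<Rightarrow> nat set"
  assumes "M = K * L"
    and "L \<ge> 1"
    and "disjoint_family_on I {..<K}"
    and "(\<Union>k<K. I k) = {..<M}"
    and "\<forall>k<K. card (I k) = L"
    and "K \<ge> 2 * CARD('n::finite) + 1"
  shows "AE \<omega> in (gauss_frame_space M :: (nat \<Rightarrow> 'n \<Rightarrow> real) measure).
           inj (maxout I K (frame_vec \<omega>))"
  using G1_AE[where M=M and 'n='n] G2_AE[where M=M and 'n='n]
proof eventually_elim
  case (elim w)
  then show ?case by (rule main_det[OF assms])
qed

end
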